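(* Let $m\ge2$ and let $\mathcal{A}\in\mathbb{S}_{m,n}$ be strongly completely positive. Then (i) all H-eigenvalues of $\mathcal{A}$ are positive; (ii) all Z-eigenvalues of $\mathcal{A}$ are nonzero; moreover, when $m$ is even all Z-eigenvalues of $\mathcal{A}$ are positive, and when $m$ is odd a Z-eigenvector associated with a positive (respectively negative) Z-eigenvalue of $\mathcal{A}$ is nonnegative (respectively nonpositive).
   Context: $\mathbb{S}_{m,n}$: symmetric real $m$th order $n$-dimensional tensors. $(u^m)_{i_1\ldots i_m}=u_{i_1}\cdots u_{i_m}$; $(\mathcal{A}x^{m-1})_i=\sum_{i_2,\dots,i_m}a_{ii_2\ldots i_m}x_{i_2}\cdots x_{i_m}$; $x^{[m-1]}=(x_i^{m-1})_i$. $\lambda\in\mathbb{R}$ is an H-eigenvalue if $\mathcal{A}x^{m-1}=\lambda x^{[m-1]}$ for some $x\in\mathbb{R}^n\setminus\{0\}$. $\lambda\in\mathbb{R}$ is a Z-eigenvalue with Z-eigenvector $x\in\mathbb{R}^n$ if $\mathcal{A}x^{m-1}=\lambda x$ and $x^Tx=1$. $\mathcal{A}$ is strongly completely positive if $\mathcal{A}=\sum_{k=1}^r(u^{(k)})^m$ with $u^{(k)}\in\mathbb{R}^n_+$ and $\mathrm{span}\{u^{(1)},\dots,u^{(r)}\}=\mathbb{R}^n$. *)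

theory Defs
  imports "HOL-Analysis.Analysis"
begin

text \<open>An m-th order tensor of dimension n = CARD('n) is represented as a real-valued
function on index lists over the finite index type 'n; only lists of length m matter.\<close>

type_synonym 'n tensor = "'n list \<Rightarrow> real"

definition sym_tensor :: "nat \<Rightarrow> 'n tensor \<Rightarrow> bool" where
  "sym_tensor m A \<longleftrightarrow>
     (\<forall>is js. length is = m \<and> mset js = mset is \<longrightarrow> A js = A is)"

definition tensor_app :: "nat \<Rightarrow> ('n::finite) tensor \<Rightarrow> real^'n \<Rightarrow> real^'n" where
  "tensor_app m A x =
     (\<chi> i. \<Sum>is\<in>{is :: 'n list. length is = m - 1}. A (i # is) * (\<Prod>j\<leftarrow>is. x $ j))"

definition H_eigenvalue :: "nat \<Rightarrow> ('n::finite) tensor \<Rightarrow> real \<Rightarrow> bool" where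
  "H_eigenvalue m A lam \<longleftrightarrow>
     (\<exists>x::real^'n. x \<noteq> 0 \<and> (\<forall>i. tensor_app m A x $ i = lam * (x $ i) ^ (m - 1)))"

definition Z_eigenpair :: "nat \<Rightarrow> ('n::finite) tensor \<Rightarrow> real \<Rightarrow> real^'n \<Rightarrow> bool" where
  "Z_eigenpair m A lam x \<longleftrightarrow> tensor_app m A x = lam *\<^sub>R x \<and> x \<bullet> x = 1"

definition strongly_completely_positive :: "nat \<Rightarrow> ('n::finite) tensor \<Rightarrow> bool" where
  "strongly_completely_positive m A \<longleftrightarrow>
     (\<exists>(r::nat) (u :: nat \<Rightarrow> real^'n).
        (\<forall>k<r. \<forall>i. u k $ i \<ge> 0) \<and>
        span (u ` {..<r}) = UNIV \<and>
        (\<forall>is. length is = m \<longrightarrow> A is = (\<Sum>k<r. \<Prod>j\<leftarrow>is. u k $ j)))"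

end

theory Submission
  imports Defs
begin

lemma fin_lists: "finite {is :: ('n::finite) list. length is = n}"
  using finite_lists_length_eq[of "UNIV :: 'n set" n] by simp

lemma prod_list_mult: "(\<Prod>j\<leftarrow>xs. f j * g j) = (\<Prod>j\<leftarrow>xs. f j) * (\<Prod>j\<leftarrow>xs. (g j :: real))"
  by (induction xs) auto

lemma lists_Suc: "{is :: 'n list. length is = Suc n} = (\<lambda>(a,is). a # is) ` (UNIV \<times> {is. length is = n})"
proof -
  have "xs \<in> (\<lambda>(a,is). a # is) ` (UNIV \<times> {is. length is = n})" if "length xs = Suc n" for xs :: "'n list"
    using that by (cases xs) auto
  then show ?thesis by auto
qed

lemma sum_lists_prod:
  fixes f :: "'n::finite \<Rightarrow> real"
  shows "(\<Sum>is\<in>{is::'n list. length is = n}. \<Prod>j\<leftarrow>is. f j) = (\<Sum>j\<in>UNIV. f j)^n"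
proof (induction n)
  case 0
  have "{is::'n list. length is = 0} = {[]}" by auto
  then show ?case by simp
next
  case (Suc n)
  have inj: "inj_on (\<lambda>(a,is). a # is) (UNIV \<times> {is::'n list. length is = n})"
    by (auto simp: inj_on_def)
  have "(\<Sum>is\<in>{is::'n list. length is = Suc n}. \<Prod>j\<leftarrow>is. f j)
      = (\<Sum>(a,ys)\<in>UNIV \<times> {is::'n list. length is = n}. f a * (\<Prod>j\<leftarrow>ys. f j))"
    unfolding lists_Suc sum.reindex[OF inj] by (simp add: comp_def case_prod_unfold)
  also have "\<dots> = (\<Sum>a\<in>UNIV. \<Sum>is\<in>{is::'n list. length is = n}. f a * (\<Prod>j\<leftarrow>is. f j))"
    by (rule sum.cartesian_product[symmetric])
  also have "\<dots> = (\<Sum>a\<in>UNIV. f a) * (\<Sum>is\<in>{is::'n list. length is = n}. (\<Prod>j\<leftarrow>is. f j))"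
    by (rule sum_product[symmetric])
  finally show ?case using Suc by simp
qed

lemma tapp:
  fixes A :: "('n::finite) tensor" and u :: "nat \<Rightarrow> real^'n"
  assumes "m \<ge> 1" and "\<forall>is. length is = m \<longrightarrow> A is = (\<Sum>k<r. \<Prod>j\<leftarrow>is. u k $ j)"
  shows "tensor_app m A x $ i = (\<Sum>k<r. u k $ i * (u k \<bullet> x)^(m-1))"
proof -
  have "tensor_app m A x $ i = (\<Sum>is\<in>{is :: 'n list. length is = m - 1}. A (i # is) * (\<Prod>j\<leftarrow>is. x $ j))"
    by (simp add: tensor_app_def)
  also have "\<dots> = (\<Sum>is\<in>{is :: 'n list. length is = m - 1}. \<Sum>k<r. u k $ i * (\<Prod>j\<leftarrow>is. u k $ j * x $ j))"
  proof (rule sum.cong[OF refl])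
    fix ys :: "'n list" assume "ys \<in> {is. length is = m - 1}"
    then have "length (i # ys) = m" using assms(1) by auto
    then have "A (i # ys) = (\<Sum>k<r. u k $ i * (\<Prod>j\<leftarrow>ys. u k $ j))" using assms(2) by simp
    then show "A (i # ys) * (\<Prod>j\<leftarrow>ys. x $ j) = (\<Sum>k<r. u k $ i * (\<Prod>j\<leftarrow>ys. u k $ j * x $ j))"
      by (simp add: prod_list_mult sum_distrib_right mult.assoc)
  qed
  also have "\<dots> = (\<Sum>k<r. u k $ i * (\<Sum>is\<in>{is :: 'n list. length is = m - 1}. \<Prod>j\<leftarrow>is. u k $ j * x $ j))"
    by (subst sum.swap) (simp add: sum_distrib_left)
  also have "\<dots> = (\<Sum>k<r. u k $ i * (u k \<bullet> x)^(m-1))"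
    by (simp add: sum_lists_prod inner_vec_def)
  finally show ?thesis .
qed

lemma key_facts:
  fixes A :: "('n::finite) tensor" and u :: "nat \<Rightarrow> real^'n" and x :: "real^'n"
  assumes m: "m \<ge> 2"
    and nn: "\<forall>k<r. \<forall>i. u k $ i \<ge> 0"
    and sp: "span (u ` {..<r}) = UNIV"
    and rep: "\<forall>is. length is = m \<longrightarrow> A is = (\<Sum>k<r. \<Prod>j\<leftarrow>is. u k $ j)"
  shows "x \<bullet> tensor_app m A x = (\<Sum>k<r. (u k \<bullet> x)^m)"
    and "x \<noteq> 0 \<Longrightarrow> \<exists>k<r. u k \<bullet> x \<noteq> 0"
    and "odd m \<Longrightarrow> tensor_app m A x $ i \<ge> 0"
    and "odd m \<Longrightarrow> x \<noteq> 0 \<Longrightarrow> \<exists>i. tensor_app m A x $ i > 0"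
    and "even m \<Longrightarrow> x \<noteq> 0 \<Longrightarrow> (\<Sum>k<r. (u k \<bullet> x)^m) > 0"
proof -
  have T: "\<And>i. tensor_app m A x $ i = (\<Sum>k<r. u k $ i * (u k \<bullet> x)^(m-1))"
    using tapp[OF _ rep] m by auto
  have "x \<bullet> tensor_app m A x = (\<Sum>i\<in>UNIV. x $ i * (\<Sum>k<r. u k $ i * (u k \<bullet> x)^(m-1)))"
    by (simp add: inner_vec_def T mult.commute)
  also have "\<dots> = (\<Sum>i\<in>UNIV. \<Sum>k<r. x $ i * (u k $ i * (u k \<bullet> x)^(m-1)))"
    by (simp add: sum_distrib_left)
  also have "\<dots> = (\<Sum>k<r. \<Sum>i\<in>UNIV. x $ i * (u k $ i * (u k \<bullet> x)^(m-1)))"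
    by (rule sum.swap)
  also have "\<dots> = (\<Sum>k<r. (u k \<bullet> x)^(m-1) * (\<Sum>i\<in>UNIV. u k $ i * x $ i))"
    by (simp add: sum_distrib_left mult_ac)
  also have "\<dots> = (\<Sum>k<r. (u k \<bullet> x)^m)"
  proof (rule sum.cong[OF refl])
    fix k
    have "(u k \<bullet> x)^(m-1) * (u k \<bullet> x) = (u k \<bullet> x)^m"
      using m power_Suc2[of "u k \<bullet> x" "m-1"] by (simp add: Suc_diff_le[symmetric])
    then show "(u k \<bullet> x)^(m-1) * (\<Sum>i\<in>UNIV. u k $ i * x $ i) = (u k \<bullet> x)^m"
      by (simp add: inner_vec_def)
  qed
  finally show "x \<bullet> tensor_app m A x = (\<Sum>k<r. (u k \<bullet> x)^m)" .
  show ex: "\<exists>k<r. u k \<bullet> x \<noteq> 0" if "x \<noteq> 0"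
  proof (rule ccontr)
    assume "\<not> ?thesis"
    then have "\<And>y. y \<in> u ` {..<r} \<Longrightarrow> orthogonal x y"
      by (auto simp: orthogonal_def inner_commute)
    then have "orthogonal x x" using orthogonal_to_span[of x "u ` {..<r}" x] sp by auto
    then show False using that by (simp add: orthogonal_def)
  qed
  show nnT: "tensor_app m A x $ i \<ge> 0" if "odd m" for i
  proof -
    have "even (m-1)" using that m by simp
    then show ?thesis unfolding T using nn
      by (intro sum_nonneg mult_nonneg_nonneg) (auto simp: zero_le_even_power)
  qed
  show "\<exists>i. tensor_app m A x $ i > 0" if od: "odd m" and x0: "x \<noteq> 0"
  proof -
    obtain k where k: "k < r" "u k \<bullet> x \<noteq> 0" using ex x0 by blast
    then have "u k \<noteq> 0" by auto
    then obtain i where i: "u k $ i \<noteq> 0"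
      by (auto simp: vec_eq_iff)
    have ui: "u k $ i > 0" using nn k i by (metis less_eq_real_def)
    have ev: "even (m-1)" using od m by simp
    have cp: "(u k \<bullet> x)^(m-1) > 0" using k ev
      by (simp add: zero_less_power_eq)
    have "u k $ i * (u k \<bullet> x)^(m-1) \<le> (\<Sum>k<r. u k $ i * (u k \<bullet> x)^(m-1))"
      using k nn ev by (intro member_le_sum) (auto simp: zero_le_even_power)
    then show ?thesis unfolding T using ui cp
      using mult_pos_pos[OF ui cp] by (intro exI[of _ i]) linarith
  qed
  show "(\<Sum>k<r. (u k \<bullet> x)^m) > 0" if evm: "even m" and x0: "x \<noteq> 0"
  proof -
    obtain k where k: "k < r" "u k \<bullet> x \<noteq> 0" using ex x0 by blast
    show ?thesis using k evm
      by (intro sum_pos2[of _ k]) (auto simp: zero_le_even_power zero_less_power_eq)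
  qed
qed

theorem mainTheorem7:
  fixes A :: "('n::finite) tensor" and m :: nat
  assumes "m \<ge> 2"
    and "sym_tensor m A"
    and "strongly_completely_positive m A"
  shows "(\<forall>lam. H_eigenvalue m A lam \<longrightarrow> lam > 0)
       \<and> (\<forall>lam x. Z_eigenpair m A lam x \<longrightarrow> lam \<noteq> 0)
       \<and> (even m \<longrightarrow> (\<forall>lam x. Z_eigenpair m A lam x \<longrightarrow> lam > 0))
       \<and> (odd m \<longrightarrow> (\<forall>lam x. Z_eigenpair m A lam x \<longrightarrow>
              (lam > 0 \<longrightarrow> (\<forall>i. x $ i \<ge> 0)) \<and> (lam < 0 \<longrightarrow> (\<forall>i. x $ i \<le> 0))))"
proof -
  obtain r and u :: "nat \<Rightarrow> real^'n" where
    nn: "\<forall>k<r. \<forall>i. u k $ i \<ge> 0" and sp: "span (u ` {..<r}) = UNIV"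
    and rep: "\<forall>is. length is = m \<longrightarrow> A is = (\<Sum>k<r. \<Prod>j\<leftarrow>is. u k $ j)"
    using assms(3) unfolding strongly_completely_positive_def by blast
  note K = key_facts[OF assms(1) nn sp rep]
  have H: "lam > 0" if hx: "H_eigenvalue m A lam" for lam
  proof -
    obtain x :: "real^'n" where xx: "x \<noteq> 0 \<and> (\<forall>i. tensor_app m A x $ i = lam * (x $ i) ^ (m - 1))"
      using hx unfolding H_eigenvalue_def by blast
    have x0: "x \<noteq> 0" using xx by (rule conjunct1)
    have e: "tensor_app m A x $ i = lam * (x $ i) ^ (m - 1)" for i using xx by (simp only: )
    show ?thesis
    proof (cases "even m")
      case True
      have pw: "x $ i * (x $ i)^(m-1) = (x $ i)^m" for i
      proof -
        have mS: "Suc (m-1) = m" using assms(1) by simp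
        show ?thesis using power_Suc[of "x $ i" "m-1"] unfolding mS by simp
      qed
      have "x \<bullet> tensor_app m A x = (\<Sum>i\<in>UNIV. x $ i * (lam * (x $ i)^(m-1)))"
        by (simp add: inner_vec_def e)
      also have "\<dots> = (\<Sum>i\<in>UNIV. lam * (x $ i)^m)"
        by (intro sum.cong refl) (metis pw mult.left_commute)
      also have "\<dots> = lam * (\<Sum>i\<in>UNIV. (x $ i)^m)"
        by (simp add: sum_distrib_left)
      finally have "x \<bullet> tensor_app m A x = lam * (\<Sum>i\<in>UNIV. (x $ i)^m)" .
      moreover have "(\<Sum>i\<in>UNIV. (x $ i)^m) > 0"
      proof -
        obtain i where "x $ i \<noteq> 0" using x0 by (auto simp: vec_eq_iff)
        then show ?thesis using True
          by (intro sum_pos2[of _ i]) (auto simp: zero_le_even_power zero_less_power_eq)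
      qed
      moreover have "x \<bullet> tensor_app m A x > 0" using K(1)[of x] K(5)[OF True x0] by simp
      ultimately show ?thesis by (metis zero_less_mult_pos2)
    next
      case False
      obtain i where "tensor_app m A x $ i > 0" using K(4)[OF False x0] by blast
      moreover have "even (m-1)" using False assms(1) by simp
      then have "(x $ i)^(m-1) \<ge> 0" by (simp add: zero_le_even_power)
      ultimately show ?thesis using e[of i]
      proof -
        assume a: "tensor_app m A x $ i > 0" "(x $ i)^(m-1) \<ge> 0"
        show ?thesis
        proof (rule ccontr)
          assume "\<not> lam > 0"
          then have "lam \<le> 0" by simp
          from mult_nonpos_nonneg[OF this a(2)] a(1) e[of i] show False by simp
        qed
      qed
    qed
  qed
  have Z: "(even m \<longrightarrow> lam > 0) \<and> (odd m \<longrightarrow> lam \<noteq> 0 \<and>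
              (lam > 0 \<longrightarrow> (\<forall>i. x $ i \<ge> 0)) \<and> (lam < 0 \<longrightarrow> (\<forall>i. x $ i \<le> 0)))"
    if "Z_eigenpair m A lam x" for lam x
  proof -
    have e: "tensor_app m A x = lam *\<^sub>R x" and n1: "x \<bullet> x = 1"
      using that unfolding Z_eigenpair_def by auto
    have x0: "x \<noteq> 0" using n1 by auto
    have ev: "lam > 0" if "even m"
    proof -
      have "x \<bullet> tensor_app m A x = lam" using e n1 by simp
      then show ?thesis using K(1)[of x] K(5)[OF that x0] by simp
    qed
    have od: "lam \<noteq> 0 \<and> (lam > 0 \<longrightarrow> (\<forall>i. x $ i \<ge> 0)) \<and> (lam < 0 \<longrightarrow> (\<forall>i. x $ i \<le> 0))"
      if odm: "odd m"
    proof -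
      have ge: "lam * x $ i \<ge> 0" for i using K(3)[OF odm, of x i] e by simp
      obtain i where "tensor_app m A x $ i > 0" using K(4)[OF odm x0] by blast
      then have "lam \<noteq> 0" using e by auto
      moreover have "lam > 0 \<longrightarrow> (\<forall>i. x $ i \<ge> 0)"
        using ge by (auto simp: zero_le_mult_iff)
      moreover have "lam < 0 \<longrightarrow> (\<forall>i. x $ i \<le> 0)"
        using ge by (auto simp: zero_le_mult_iff)
      ultimately show ?thesis by blast
    qed
    show ?thesis using ev od by blast
  qed
  show ?thesis using H Z by blast
qed

end
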